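(* Assume the setting and standing assumptions described in the context, and let $d>0$ with $\Xi\subset\Omega_d=\{z\in\mathbb{R}^{2n}:|z|<d\}$. Let $p\ge1$, $\epsilon>0$, and let $\delta_0,\dots,\delta_p\in\mathbb{R}$ satisfy: $\mathcal{L}_F^p\phi(z)\le\sum_{i=0}^{p-1}\delta_i\mathcal{L}_F^i\phi(z)+\delta_p$ for all $z\in\Omega_d$; $\delta_0\phi((x,0))+\delta_p\ge\epsilon$ for all $x\in\mathrm{Z}$; and $\delta_i\ge0$ for all $i$. Let $A$ be the $(p+1)\times(p+1)$ matrix with $A_{k,k+1}=1$ for $k=1,\dots,p-1$, $p$-th row $(\delta_0,\dots,\delta_{p-1},1)$, last row zero and other entries zero; $C=(1,0,\dots,0)$. Define $$\eta(x,0)=\big(\phi((x,0)),\max(\mathcal{L}_F\phi((x,0)),0),\dots,\max(\mathcal{L}_F^{p-1}\phi((x,0)),0),\delta_p\big)^\top,\qquad \eta_1(x,t)=Ce^{At}\eta(x,0).$$ Then $\eta_1(x,t)\ge\phi(\xi(t;x))$ for all $t\in[0,\tau(x)]$ and all $x\in\mathrm{Z}$.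
   Context: Let $f:\mathbb{R}^n\times\mathbb{R}^m\to\mathbb{R}^n$ and a feedback law $\upsilon:\mathbb{R}^n\to\mathbb{R}^m$ be given. Define $F:\mathbb{R}^{2n}\to\mathbb{R}^{2n}$ by $F(z,e)=\big(f(z,\upsilon(z+e)),\,-f(z,\upsilon(z+e))\big)$. For $x\in\mathbb{R}^n$, $\xi(t;x)$ denotes the solution of $\dot\xi=F(\xi)$ with $\xi(0;x)=(x,0)$. A triggering function $\phi:\mathbb{R}^{2n}\to\mathbb{R}$ is given, and $\tau(x)=\inf\{t>0:\phi(\xi(t;x))=0\}$. $\mathcal{L}_F^k\phi$ denotes the $k$-th Lie derivative of $\phi$ along $F$ ($\mathcal{L}_F^0\phi=\phi$). Standing assumptions: (i) $F$ is smooth and homogeneous of degree $\alpha\ge1$ with all weights $1$, i.e. $F(\lambda\xi)=\lambda^{\alpha+1}F(\xi)$ for all $\lambda>0$; (ii) $\phi$ is smooth and homogeneous of degree $\theta\ge1$ with weights $1$, i.e. $\phi(\lambda\xi)=\lambda^{\theta+1}\phi(\xi)$ for all $\lambda>0$; (iii) for every $x\ne0$, $\phi((x,0))<0$ and there exists $t_x\in(0,\infty)$ with $\phi(\xi(t_x;x))=0$; (iv) compact sets $\mathrm{Z}\subset\mathbb{R}^n$, $\Xi\subset\mathbb{R}^{2n}$ containing a neighbourhood of the origin are given such that for all $x\in\mathrm{Z}$, $t\ge0$: $\phi(\xi(t;x))\le0\Rightarrow\xi(t;x)\in\Xi$; (v) the origin is the only equilibrium of $\dot\zeta=f(\zeta,\upsilon(\zeta))$.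 *)

theory Defs
  imports "HOL-Analysis.Analysis"
begin

fun iter_dd :: "('a::real_normed_vector \<Rightarrow> 'b::real_normed_vector) \<Rightarrow> 'a list \<Rightarrow> 'a \<Rightarrow> 'b" where
  "iter_dd g [] = g"
| "iter_dd g (v # vs) = (\<lambda>x. frechet_derivative (iter_dd g vs) (at x) v)"

definition smooth_fun :: "('a::real_normed_vector \<Rightarrow> 'b::real_normed_vector) \<Rightarrow> bool" where
  "smooth_fun g \<longleftrightarrow> (\<forall>vs x. iter_dd g vs differentiable (at x))"

fun lie :: "('a::real_normed_vector \<Rightarrow> 'a) \<Rightarrow> ('a \<Rightarrow> real) \<Rightarrow> nat \<Rightarrow> 'a \<Rightarrow> real" where
  "lie F phi 0 = phi"
| "lie F phi (Suc k) = (\<lambda>z. frechet_derivative (lie F phi k) (at z) (F z))"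

definition Fvf :: "('n \<Rightarrow> 'm \<Rightarrow> 'n::real_normed_vector) \<Rightarrow> ('n \<Rightarrow> 'm) \<Rightarrow> 'n \<times> 'n \<Rightarrow> 'n \<times> 'n" where
  "Fvf f u = (\<lambda>(z, e). (f z (u (z + e)), - f z (u (z + e))))"

definition trig_time :: "('a \<Rightarrow> real) \<Rightarrow> ('x \<Rightarrow> real \<Rightarrow> 'a) \<Rightarrow> 'x \<Rightarrow> real" where
  "trig_time phi xi x = Inf {t. t > 0 \<and> phi (xi x t) = 0}"

text \<open>Square matrices of size m, indexed 1..m, represented as nat \<Rightarrow> nat \<Rightarrow> real.\<close>
definition mat_mul :: "nat \<Rightarrow> (nat \<Rightarrow> nat \<Rightarrow> real) \<Rightarrow> (nat \<Rightarrow> nat \<Rightarrow> real) \<Rightarrow> nat \<Rightarrow> nat \<Rightarrow> real" where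
  "mat_mul m A B = (\<lambda>i j. \<Sum>k\<in>{1..m}. A i k * B k j)"

fun mat_pow :: "nat \<Rightarrow> (nat \<Rightarrow> nat \<Rightarrow> real) \<Rightarrow> nat \<Rightarrow> nat \<Rightarrow> nat \<Rightarrow> real" where
  "mat_pow m A 0 = (\<lambda>i j. if i = j then 1 else 0)"
| "mat_pow m A (Suc k) = mat_mul m (mat_pow m A k) A"

definition mat_exp :: "nat \<Rightarrow> (nat \<Rightarrow> nat \<Rightarrow> real) \<Rightarrow> real \<Rightarrow> nat \<Rightarrow> nat \<Rightarrow> real" where
  "mat_exp m A t = (\<lambda>i j. \<Sum>k. (t ^ k / fact k) * mat_pow m A k i j)"

definition Amat :: "nat \<Rightarrow> (nat \<Rightarrow> real) \<Rightarrow> nat \<Rightarrow> nat \<Rightarrow> real" where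
  "Amat p \<delta> = (\<lambda>i j.
     if 1 \<le> i \<and> i \<le> p - 1 \<and> j = i + 1 then 1
     else if i = p \<and> 1 \<le> j \<and> j \<le> p then \<delta> (j - 1)
     else if i = p \<and> j = p + 1 then 1
     else 0)"

definition eta0 :: "('a::real_normed_vector \<Rightarrow> 'a) \<Rightarrow> ('a \<Rightarrow> real) \<Rightarrow> nat \<Rightarrow> (nat \<Rightarrow> real) \<Rightarrow> 'a \<Rightarrow> nat \<Rightarrow> real" where
  "eta0 F phi p \<delta> w = (\<lambda>j.
     if j = 1 then phi w
     else if 2 \<le> j \<and> j \<le> p then max (lie F phi (j - 1) w) 0
     else if j = p + 1 then \<delta> p
     else 0)"

definition eta1 :: "('a::real_normed_vector \<Rightarrow> 'a) \<Rightarrow> ('a \<Rightarrow> real) \<Rightarrow> nat \<Rightarrow> (nat \<Rightarrow> real) \<Rightarrow> 'a \<Rightarrow> real \<Rightarrow> real" where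
  "eta1 F phi p \<delta> w t =
     (\<Sum>j\<in>{1..p+1}. mat_exp (p + 1) (Amat p \<delta>) t 1 j * eta0 F phi p \<delta> w j)"

end

theory Submission
  imports Defs
begin


lemma iter_dd_append: "iter_dd g (ws @ vs) = iter_dd (iter_dd g vs) ws"
  by (induction ws) auto

lemma smooth_diff: "smooth_fun g \<Longrightarrow> g differentiable (at x)"
  unfolding smooth_fun_def by (metis iter_dd.simps(1))

lemma smooth_D: "smooth_fun g \<Longrightarrow> smooth_fun (\<lambda>x. frechet_derivative g (at x) v)"
proof -
  assume g: "smooth_fun g"
  have e: "(\<lambda>x. frechet_derivative g (at x) v) = iter_dd g [v]" by simp
  show ?thesis unfolding smooth_fun_def e
    using g unfolding smooth_fun_def by (metis iter_dd_append)
qed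

lemma fd_has: "g differentiable (at x) \<Longrightarrow> (g has_derivative frechet_derivative g (at x)) (at x)"
  by (simp add: frechet_derivative_works)

lemma smooth_zero: "smooth_fun (\<lambda>x::'a::real_normed_vector. 0::real)"
proof -
  have "iter_dd (\<lambda>x::'a. 0::real) vs = (\<lambda>x. 0)" for vs
  proof (induction vs)
    case Nil then show ?case by simp
  next
    case (Cons v vs)
    have "frechet_derivative (\<lambda>x::'a. 0::real) (at x) = (\<lambda>_. 0)" for x
      using frechet_derivative_at[OF has_derivative_const[of "0::real"]] by (rule sym)
    then show ?case using Cons by simp
  qed
  then show ?thesis unfolding smooth_fun_def by simp
qed

inductive alg :: "('a::real_normed_vector \<Rightarrow> real) \<Rightarrow> bool" where
  base: "smooth_fun g \<Longrightarrow> alg g"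
| add: "alg g \<Longrightarrow> alg h \<Longrightarrow> alg (\<lambda>x. g x + h x)"
| mul: "alg g \<Longrightarrow> alg h \<Longrightarrow> alg (\<lambda>x. g x * h x)"

lemma alg_D: "alg g \<Longrightarrow> (\<forall>x. g differentiable (at x)) \<and> (\<forall>v. alg (\<lambda>x. frechet_derivative g (at x) v))"
proof (induction rule: alg.induct)
  case (base g)
  then show ?case using smooth_diff smooth_D alg.base by blast
next
  case (add g h)
  have d: "((\<lambda>x. g x + h x) has_derivative (\<lambda>v. frechet_derivative g (at x) v + frechet_derivative h (at x) v)) (at x)" for x
    using add fd_has has_derivative_add by blast
  have eq: "frechet_derivative (\<lambda>x. g x + h x) (at x) = (\<lambda>v. frechet_derivative g (at x) v + frechet_derivative h (at x) v)" for x
    using frechet_derivative_at[OF d] by (rule sym)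
  show ?case
  proof (intro conjI allI)
    fix x show "(\<lambda>x. g x + h x) differentiable (at x)" using d by (rule differentiableI)
  next
    fix v
    have "alg (\<lambda>x. frechet_derivative g (at x) v + frechet_derivative h (at x) v)"
      using add by (intro alg.add) auto
    then show "alg (\<lambda>x. frechet_derivative (\<lambda>x. g x + h x) (at x) v)" by (simp only: eq)
  qed
next
  case (mul g h)
  have d: "((\<lambda>x. g x * h x) has_derivative (\<lambda>v. g x * frechet_derivative h (at x) v + frechet_derivative g (at x) v * h x)) (at x)" for x
    using mul fd_has has_derivative_mult by blast
  have eq: "frechet_derivative (\<lambda>x. g x * h x) (at x) = (\<lambda>v. g x * frechet_derivative h (at x) v + frechet_derivative g (at x) v * h x)" for x
    using frechet_derivative_at[OF d] by (rule sym)
  show ?case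
  proof (intro conjI allI)
    fix x show "(\<lambda>x. g x * h x) differentiable (at x)" using d by (rule differentiableI)
  next
    fix v
    have "alg (\<lambda>x. g x * frechet_derivative h (at x) v + frechet_derivative g (at x) v * h x)"
      using mul by (intro alg.add alg.mul) auto
    then show "alg (\<lambda>x. frechet_derivative (\<lambda>x. g x * h x) (at x) v)" by (simp only: eq)
  qed
qed

lemma alg_sum: "finite S \<Longrightarrow> (\<forall>b\<in>S. alg (g b)) \<Longrightarrow> alg (\<lambda>x. \<Sum>b\<in>S. g b x)"
proof (induction S rule: finite_induct)
  case empty then show ?case using alg.base[OF smooth_zero] by simp
next
  case (insert b S)
  then show ?case using alg.add[of "g b" "\<lambda>x. \<Sum>b\<in>S. g b x"] by simp
qed

lemma smooth_comp_inner:
  fixes F :: "'a::real_normed_vector \<Rightarrow> 'b::real_inner"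
  assumes F: "smooth_fun F"
  shows "smooth_fun (\<lambda>z. F z \<bullet> b)"
proof -
  have hd: "((\<lambda>z. iter_dd F vs z \<bullet> b) has_derivative (\<lambda>h. frechet_derivative (iter_dd F vs) (at x) h \<bullet> b)) (at x)" for x vs
    using bounded_linear.has_derivative[OF bounded_linear_inner_left fd_has] F unfolding smooth_fun_def by blast
  have "iter_dd (\<lambda>z. F z \<bullet> b) vs = (\<lambda>z. iter_dd F vs z \<bullet> b)" for vs
  proof (induction vs)
    case Nil then show ?case by simp
  next
    case (Cons v vs)
    have "frechet_derivative (\<lambda>z. iter_dd F vs z \<bullet> b) (at x) = (\<lambda>h. frechet_derivative (iter_dd F vs) (at x) h \<bullet> b)" for x
      using frechet_derivative_at[OF hd] by (rule sym)
    then show ?case using Cons by simp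
  qed
  moreover have "(\<lambda>z. iter_dd F vs z \<bullet> b) differentiable (at x)" for vs x
    using hd by (meson differentiableI)
  ultimately show ?thesis unfolding smooth_fun_def by simp
qed

lemma lie_alg:
  fixes F :: "'a::euclidean_space \<Rightarrow> 'a"
  assumes F: "smooth_fun F" and phi: "smooth_fun phi"
  shows "alg (lie F phi k)"
proof (induction k)
  case 0 then show ?case using phi alg.base by simp
next
  case (Suc k)
  have lin: "linear (frechet_derivative (lie F phi k) (at z))" for z
    using alg_D[OF Suc] fd_has has_derivative_linear by blast
  have "lie F phi (Suc k) = (\<lambda>z. \<Sum>b\<in>Basis. (F z \<bullet> b) * frechet_derivative (lie F phi k) (at z) b)"
  proof (rule ext)
    fix z
    have "frechet_derivative (lie F phi k) (at z) (F z) \<bullet> 1 = (\<Sum>b\<in>Basis. (F z \<bullet> b) * (frechet_derivative (lie F phi k) (at z) b \<bullet> 1))"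
      by (rule Linear_Algebra.linear_componentwise[OF lin])
    then show "lie F phi (Suc k) z = (\<Sum>b\<in>Basis. (F z \<bullet> b) * frechet_derivative (lie F phi k) (at z) b)"
      by simp
  qed
  moreover have "alg (\<lambda>z. \<Sum>b\<in>Basis. (F z \<bullet> b) * frechet_derivative (lie F phi k) (at z) b)"
    apply (rule alg_sum)
    using alg.mul[OF alg.base[OF smooth_comp_inner[OF F]]] alg_D[OF Suc] by auto
  ultimately show ?case by simp
qed

lemma lie_diff:
  fixes F :: "'a::euclidean_space \<Rightarrow> 'a"
  assumes "smooth_fun F" "smooth_fun phi"
  shows "lie F phi k differentiable (at z)"
  using alg_D[OF lie_alg[OF assms]] by blast




lemma sdl: "finite S \<Longrightarrow> i \<in> S \<Longrightarrow> (\<Sum>l\<in>S. (if i = l then 1 else 0) * (f l::real)) = f i"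
proof -
  assume "finite S" "i \<in> S"
  have "(\<Sum>l\<in>S. (if i = l then 1 else 0) * f l) = (\<Sum>l\<in>S. if i = l then f l else 0)"
    by (rule sum.cong) auto
  then show ?thesis using \<open>finite S\<close> \<open>i \<in> S\<close> by simp
qed

lemma sdr: "finite S \<Longrightarrow> j \<in> S \<Longrightarrow> (\<Sum>l\<in>S. (f l::real) * (if l = j then 1 else 0)) = f j"
proof -
  assume "finite S" "j \<in> S"
  have "(\<Sum>l\<in>S. f l * (if l = j then 1 else 0)) = (\<Sum>l\<in>S. if l = j then f l else 0)"
    by (rule sum.cong) auto
  then show ?thesis using \<open>finite S\<close> \<open>j \<in> S\<close> by simp
qed

lemma aux_div: "(a::real) \<noteq> 0 \<Longrightarrow> a * (X / (a * b)) = X / b"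
  by simp

lemma mat_pow_left:
  assumes "i \<in> {1..m}" "j \<in> {1..m}"
  shows "mat_pow m A (Suc k) i j = (\<Sum>l\<in>{1..m}. A i l * mat_pow m A k l j)"
  using assms(2)
proof (induction k arbitrary: j)
  case 0
  have "mat_pow m A (Suc 0) i j = (\<Sum>l\<in>{1..m}. (if i = l then 1 else 0) * A l j)"
    by (simp add: mat_mul_def)
  also have "\<dots> = A i j" using assms(1) by (rule sdl[OF finite_atLeastAtMost])
  also have "\<dots> = (\<Sum>l\<in>{1..m}. A i l * mat_pow m A 0 l j)"
    using sdr[OF finite_atLeastAtMost 0, of "A i"] by simp
  finally show ?case .
next
  case (Suc k)
  have "mat_pow m A (Suc (Suc k)) i j = (\<Sum>q\<in>{1..m}. mat_pow m A (Suc k) i q * A q j)"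
    by (simp add: mat_mul_def)
  also have "\<dots> = (\<Sum>q\<in>{1..m}. (\<Sum>l\<in>{1..m}. A i l * mat_pow m A k l q) * A q j)"
    using Suc.IH by simp
  also have "\<dots> = (\<Sum>l\<in>{1..m}. A i l * (\<Sum>q\<in>{1..m}. mat_pow m A k l q * A q j))"
    by (simp add: sum_distrib_left sum_distrib_right mult.assoc) (rule sum.swap)
  also have "\<dots> = (\<Sum>l\<in>{1..m}. A i l * mat_pow m A (Suc k) l j)"
    by (simp add: mat_mul_def)
  finally show ?case .
qed

lemma mat_pow_bound:
  assumes "\<And>i j. \<bar>A i j\<bar> \<le> K" "K \<ge> 0"
  shows "\<bar>mat_pow m A k i j\<bar> \<le> (real m * K) ^ k"
proof (induction k arbitrary: i j)
  case 0 then show ?case by simp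
next
  case (Suc k)
  have "\<bar>mat_pow m A (Suc k) i j\<bar> = \<bar>\<Sum>l\<in>{1..m}. mat_pow m A k i l * A l j\<bar>"
    by (simp add: mat_mul_def)
  also have "\<dots> \<le> (\<Sum>l\<in>{1..m}. \<bar>mat_pow m A k i l * A l j\<bar>)" by (rule sum_abs)
  also have "\<dots> \<le> (\<Sum>l\<in>{1..m}. (real m * K) ^ k * K)"
    apply (rule sum_mono)
    unfolding abs_mult using Suc assms by (simp add: mult_mono')
  also have "\<dots> = (real m * K) ^ Suc k" by simp
  finally show ?case .
qed

lemma mat_exp_summable:
  assumes "\<And>i j. \<bar>A i j\<bar> \<le> K" "K \<ge> 0"
  shows "summable (\<lambda>n. (mat_pow m A n i j / fact n) * y ^ n)"
proof (rule summable_comparison_test')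
  show "summable (\<lambda>n. inverse (fact n) * (real m * K * \<bar>y\<bar>) ^ n)"
    by (rule summable_exp)
  fix n :: nat
  have "norm ((mat_pow m A n i j / fact n) * y ^ n) = \<bar>mat_pow m A n i j\<bar> * \<bar>y\<bar> ^ n / fact n"
    by (simp add: abs_mult power_abs)
  also have "\<dots> \<le> (real m * K) ^ n * \<bar>y\<bar> ^ n / fact n"
    by (intro divide_right_mono mult_right_mono mat_pow_bound assms) auto
  also have "\<dots> = inverse (fact n) * (real m * K * \<bar>y\<bar>) ^ n"
    by (simp add: power_mult_distrib field_simps)
  finally show "norm ((mat_pow m A n i j / fact n) * y ^ n) \<le> inverse (fact n) * (real m * K * \<bar>y\<bar>) ^ n" .
qed

lemma mat_exp_alt: "mat_exp m A t i j = (\<Sum>n. (mat_pow m A n i j / fact n) * t ^ n)"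
  unfolding mat_exp_def by (simp add: field_simps)

lemma mat_exp_zero: "mat_exp m A 0 i j = (if i = j then 1 else 0)"
  unfolding mat_exp_alt powser_zero by simp

lemma mat_exp_deriv:
  assumes "\<And>i j. \<bar>A i j\<bar> \<le> K" "K \<ge> 0" "i \<in> {1..m}" "j \<in> {1..m}"
  shows "((\<lambda>t. mat_exp m A t i j) has_real_derivative (\<Sum>l\<in>{1..m}. A i l * mat_exp m A t l j)) (at t)"
proof -
  let ?c = "\<lambda>n. mat_pow m A n i j / fact n"
  have "((\<lambda>t. \<Sum>n. ?c n * t ^ n) has_real_derivative (\<Sum>n. diffs ?c n * t ^ n)) (at t)"
    by (rule termdiffs_strong_converges_everywhere) (rule mat_exp_summable[OF assms(1,2)])
  moreover have "diffs ?c n * t ^ n = (\<Sum>l\<in>{1..m}. A i l * ((mat_pow m A n l j / fact n) * t ^ n))" for n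
  proof -
    have "diffs ?c n = mat_pow m A (Suc n) i j / fact n"
      unfolding diffs_def fact_Suc by (rule aux_div) simp
    then show ?thesis using mat_pow_left[OF assms(3,4)]
      by (simp add: sum_distrib_right sum_divide_distrib mult.assoc)
  qed
  moreover have "(\<Sum>n. \<Sum>l\<in>{1..m}. A i l * ((mat_pow m A n l j / fact n) * t ^ n))
      = (\<Sum>l\<in>{1..m}. A i l * mat_exp m A t l j)"
    apply (subst suminf_sum)
    apply (intro summable_mult mat_exp_summable[OF assms(1,2)])
    apply (rule sum.cong, rule refl)
    apply (subst suminf_mult[OF mat_exp_summable[OF assms(1,2)]])
    by (simp add: mat_exp_alt)
  ultimately show ?thesis unfolding mat_exp_alt by simp
qed

lemma vec_deriv:
  assumes "\<And>i j. \<bar>A i j\<bar> \<le> K" "K \<ge> 0" "i \<in> {1..m}"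
  shows "((\<lambda>t. \<Sum>j\<in>{1..m}. mat_exp m A t i j * v j) has_real_derivative
          (\<Sum>l\<in>{1..m}. A i l * (\<Sum>j\<in>{1..m}. mat_exp m A t l j * v j))) (at t)"
proof -
  have "((\<lambda>t. \<Sum>j\<in>{1..m}. mat_exp m A t i j * v j) has_real_derivative
          (\<Sum>j\<in>{1..m}. (\<Sum>l\<in>{1..m}. A i l * mat_exp m A t l j) * v j)) (at t)"
    by (intro DERIV_sum DERIV_cmult_right mat_exp_deriv[OF assms(1,2,3)]) auto
  moreover have "(\<Sum>j\<in>{1..m}. (\<Sum>l\<in>{1..m}. A i l * mat_exp m A t l j) * v j)
      = (\<Sum>l\<in>{1..m}. A i l * (\<Sum>j\<in>{1..m}. mat_exp m A t l j * v j))"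
    by (simp add: sum_distrib_left sum_distrib_right mult.assoc) (rule sum.swap)
  ultimately show ?thesis by simp
qed

lemma vec_zero:
  assumes "i \<in> {1..m}"
  shows "(\<Sum>j\<in>{1..m}. mat_exp m A 0 i j * v j) = v i"
  using sdl[OF finite_atLeastAtMost assms, of v] by (simp add: mat_exp_zero)




lemma strict_pos:
  fixes f f' :: "nat \<Rightarrow> real \<Rightarrow> real"
  assumes deriv: "\<And>i t. i < p \<Longrightarrow> 0 \<le> t \<Longrightarrow> t \<le> T \<Longrightarrow> (f i has_real_derivative f' i t) (at t within {0..T})"
    and pos: "\<And>i t. i < p \<Longrightarrow> 0 \<le> t \<Longrightarrow> t \<le> T \<Longrightarrow> (\<forall>j<p. f j t \<ge> 0) \<Longrightarrow> f' i t > 0"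
    and init: "\<And>i. i < p \<Longrightarrow> f i 0 > 0"
  shows "\<forall>i<p. \<forall>t\<in>{0..T}. f i t > 0"
proof (rule ccontr)
  assume neg: "\<not> ?thesis"
  define N where "N = (\<Union>i<p. {t \<in> {0..T}. f i t \<le> (\<lambda>_. 0) t})"
  have N_ne: "N \<noteq> {}" using neg unfolding N_def by force
  have cont: "continuous_on {0..T} (f i)" if "i < p" for i
    by (rule DERIV_continuous_on) (use deriv that in auto)
  have "closed N" unfolding N_def
    by (intro closed_UN finite_lessThan ballI continuous_on_closed_Collect_le cont continuous_on_const closed_atLeastAtMost) auto
  moreover have bb: "bdd_below N" unfolding N_def by (rule bdd_belowI[of _ 0]) auto
  ultimately have "Inf N \<in> N" using N_ne closed_contains_Inf by blast
  define t0 where "t0 = Inf N"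
  obtain i where i: "i < p" "f i t0 \<le> 0" "0 \<le> t0" "t0 \<le> T"
    using \<open>Inf N \<in> N\<close> unfolding t0_def N_def by auto
  have "t0 \<noteq> 0" using init[OF i(1)] i(2) by auto
  then have t0pos: "t0 > 0" using i(3) by simp
  have below: "\<forall>j<p. f j t > 0" if "0 \<le> t" "t < t0" for t
  proof (rule ccontr)
    assume "\<not> (\<forall>j<p. f j t > 0)"
    then have "t \<in> N" unfolding N_def using that i(4) by force
    then have "t0 \<le> t" unfolding t0_def using bb by (rule cInf_lower)
    then show False using that by simp
  qed
  have dif: "(f i has_real_derivative f' i x) (at x)" if "0 < x" "x < t0" for x
  proof -
    have "(f i has_real_derivative f' i x) (at x within {0..T})"
      using deriv[OF i(1)] that i(4) by simp
    moreover have "at x within {0..T} = at x"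
      using that i(4) by (intro at_within_interior) simp
    ultimately show ?thesis by simp
  qed
  have "continuous_on {0..t0} (f i)"
    using cont[OF i(1)] by (rule continuous_on_subset) (use i in auto)
  then obtain l z where z: "0 < z" "z < t0" "DERIV (f i) z :> l" "f i t0 - f i 0 = (t0 - 0) * l"
    using MVT[OF t0pos, of "f i"] dif real_differentiable_def by blast
  have "l = f' i z" using DERIV_unique[OF z(3) dif[OF z(1,2)]] .
  moreover have "f' i z > 0"
  proof -
    have "\<forall>j<p. 0 < f j z" using below[of z] z by simp
    then have "\<forall>j<p. 0 \<le> f j z" by (simp add: less_imp_le)
    then show ?thesis using pos[OF i(1), of z] z i(4) by simp
  qed
  ultimately have "t0 * l > 0" using t0pos by simp
  then have "f i t0 > f i 0" using z(4) by simp
  then show False using init[OF i(1)] i(2) by simp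
qed




lemma zero_sol:
  fixes F :: "'a::euclidean_space \<Rightarrow> 'a" and y :: "real \<Rightarrow> 'a"
  assumes F0: "F 0 = 0" and Fd: "\<And>w. F differentiable (at w)"
    and y0: "y 0 = 0" and ode: "\<And>t. t \<ge> 0 \<Longrightarrow> (y has_vector_derivative F (y t)) (at t within {0..})"
    and T: "T \<ge> 0"
  shows "y T = 0"
proof (cases "T = 0")
  case True with y0 show ?thesis by simp
next
  case False then have Tpos: "T > 0" using T by simp
  have ycont: "continuous_on {0..T} y"
    unfolding continuous_on_eq_continuous_within
  proof
    fix t assume t: "t \<in> {0..T}"
    have "continuous (at t within {0..}) y"
      using ode[of t] t has_vector_derivative_continuous by auto
    then show "continuous (at t within {0..T}) y"
      by (rule continuous_within_subset) auto
  qed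
  have "compact (y ` {0..T})" by (rule compact_continuous_image[OF ycont compact_Icc])
  then obtain R where R: "\<forall>t\<in>{0..T}. norm (y t) \<le> R"
    using compact_imp_bounded bounded_iff by (metis imageI)
  have R0: "R \<ge> 0" using R[rule_format, of 0] y0 T by simp
  obtain F' where F': "(F has_derivative F') (at 0)" using Fd[of 0] differentiable_def by blast
  then have blF': "bounded_linear F'" and
    loc: "\<forall>e>0. \<exists>d>0. \<forall>w. norm (w - 0) < d \<longrightarrow> norm (F w - F 0 - F' (w - 0)) \<le> e * norm (w - 0)"
    using has_derivative_at_alt by blast+
  obtain d where d: "d > 0" "\<forall>w. norm w < d \<longrightarrow> norm (F w - F' w) \<le> norm w"
    using loc[rule_format, of 1] F0 by auto
  obtain K where K: "K > 0" "\<forall>x. norm (F' x) \<le> norm x * K"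
    using bounded_linear.pos_bounded[OF blF'] by blast
  have "continuous_on (cball 0 R) F"
    using Fd by (simp add: differentiable_imp_continuous_on differentiable_on_def differentiable_at_withinI)
  then have "compact (F ` cball 0 R)" by (rule compact_continuous_image[OF _ compact_cball])
  then obtain B where B: "\<forall>w\<in>cball 0 R. norm (F w) \<le> B"
    using compact_imp_bounded bounded_iff by (metis imageI)
  have B0: "B \<ge> 0" using B[rule_format, of 0] R0 F0 by simp
  define L where "L = K + 1 + B / d"
  have L0: "L \<ge> 0" unfolding L_def using K B0 d by simp
  have Lb: "norm (F w) \<le> L * norm w" if "norm w \<le> R" for w
  proof (cases "norm w < d")
    case True
    have "norm (F w) \<le> norm (F' w) + norm (F w - F' w)" by (rule norm_triangle_sub)
    also have "\<dots> \<le> norm w * K + norm w" using True d K by (intro add_mono) auto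
    also have "\<dots> \<le> L * norm w" unfolding L_def using B0 d by (simp add: algebra_simps)
    finally show ?thesis .
  next
    case False
    have "norm (F w) \<le> B" using B that by simp
    also have "\<dots> = (B / d) * d" using d by simp
    also have "\<dots> \<le> (B / d) * norm w" using False B0 d by (intro mult_left_mono) auto
    also have "\<dots> \<le> L * norm w" unfolding L_def using K by (simp add: algebra_simps)
    finally show ?thesis .
  qed
  define g where "g t = exp (-(2*L)*t) * (y t \<bullet> y t)" for t
  define g' where "g' t = exp (-(2*L)*t) * (-(2*L)) * (y t \<bullet> y t) + exp (-(2*L)*t) * (2 * (y t \<bullet> F (y t)))" for t
  have gd: "(g has_real_derivative g' t) (at t within {0..})" if "t \<ge> 0" for t
  proof -
    have yd: "(y has_derivative (\<lambda>h. h *\<^sub>R F (y t))) (at t within {0..})"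
      using ode[OF that] by (simp add: has_vector_derivative_def)
    have "((\<lambda>t. y t \<bullet> y t) has_derivative (\<lambda>h. y t \<bullet> (h *\<^sub>R F (y t)) + (h *\<^sub>R F (y t)) \<bullet> y t)) (at t within {0..})"
      by (rule has_derivative_inner[OF yd yd])
    moreover have "(\<lambda>h. y t \<bullet> (h *\<^sub>R F (y t)) + (h *\<^sub>R F (y t)) \<bullet> y t) = (*) (2 * (y t \<bullet> F (y t)))"
      by (auto simp: fun_eq_iff inner_commute algebra_simps)
    ultimately have yy: "((\<lambda>t. y t \<bullet> y t) has_real_derivative (2 * (y t \<bullet> F (y t)))) (at t within {0..})"
      by (simp add: has_field_derivative_def)
    have e: "((\<lambda>t. exp (-(2*L)*t)) has_real_derivative exp (-(2*L)*t) * (-(2*L))) (at t within {0..})"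
      by (auto intro!: derivative_eq_intros)
    show ?thesis unfolding g_def g'_def
      using DERIV_mult[OF e yy] by (simp add: mult.commute)
  qed
  have gneg: "g' t \<le> 0" if "t \<in> {0..T}" for t
  proof -
    have "y t \<bullet> F (y t) \<le> norm (y t) * norm (F (y t))" by (rule norm_cauchy_schwarz)
    also have "\<dots> \<le> norm (y t) * (L * norm (y t))"
      using Lb R that by (intro mult_left_mono) auto
    also have "\<dots> = L * (y t \<bullet> y t)" by (simp add: power2_norm_eq_inner[symmetric] power2_eq_square)
    finally have "y t \<bullet> F (y t) \<le> L * (y t \<bullet> y t)" .
    then have "2 * (y t \<bullet> F (y t)) - 2 * L * (y t \<bullet> y t) \<le> 0" by simp
    then have "exp (-(2*L)*t) * (2 * (y t \<bullet> F (y t)) - 2 * L * (y t \<bullet> y t)) \<le> 0"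
      by (simp add: mult_nonneg_nonpos)
    then show ?thesis unfolding g'_def by (simp add: algebra_simps)
  qed
  have gcont: "continuous_on {0..T} g"
    by (rule DERIV_continuous_on[of _ _ g']) (use gd has_field_derivative_subset in fastforce)
  have gdif: "(g has_real_derivative g' x) (at x)" if "0 < x" "x < T" for x
  proof -
    have "(g has_real_derivative g' x) (at x within {0..T})"
      using gd[of x] that has_field_derivative_subset by fastforce
    moreover have "at x within {0..T} = at x"
      using that by (intro at_within_interior) simp
    ultimately show ?thesis by simp
  qed
  obtain l z where z: "0 < z" "z < T" "DERIV g z :> l" "g T - g 0 = (T - 0) * l"
    using MVT[OF Tpos gcont] gdif real_differentiable_def by blast
  have "l = g' z" using DERIV_unique[OF z(3) gdif[OF z(1,2)]] .
  then have "l \<le> 0" using gneg z by simp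
  then have "g T \<le> 0" using z(4) Tpos y0 unfolding g_def by (simp add: mult_nonneg_nonpos)
  then have "y T \<bullet> y T \<le> 0" unfolding g_def by (simp add: mult_le_0_iff)
  then have "y T \<bullet> y T = 0" using inner_ge_zero[of "y T"] by linarith
  then show ?thesis by simp
qed




lemma compare:
  fixes u y :: "nat \<Rightarrow> real \<Rightarrow> real" and \<delta> :: "nat \<Rightarrow> real"
  assumes p: "p \<ge> 1" and dn: "\<And>i. i \<le> p \<Longrightarrow> \<delta> i \<ge> 0"
    and ud: "\<And>k t. k < p \<Longrightarrow> (u k has_real_derivative (if k < p - 1 then u (Suc k) t else (\<Sum>i<p. \<delta> i * u i t) + \<delta> p)) (at t)"
    and yd: "\<And>k t. k < p \<Longrightarrow> 0 \<le> t \<Longrightarrow> t \<le> T \<Longrightarrow> (y k has_real_derivative y (Suc k) t) (at t within {0..T})"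
    and bound: "\<And>t. 0 \<le> t \<Longrightarrow> t \<le> T \<Longrightarrow> y p t \<le> (\<Sum>i<p. \<delta> i * y i t) + \<delta> p"
    and init: "\<And>k. k < p \<Longrightarrow> u k 0 \<ge> y k 0"
  shows "\<forall>t\<in>{0..T}. u 0 t \<ge> y 0 t"
proof
  fix t assume t: "t \<in> {0..T}"
  define S where "S = (\<Sum>i<p. \<delta> i)"
  have S0: "S \<ge> 0" unfolding S_def using dn by (intro sum_nonneg) auto
  define lam where "lam = 2 + S"
  show "u 0 t \<ge> y 0 t"
  proof (rule ccontr)
    assume "\<not> u 0 t \<ge> y 0 t"
    then have c: "y 0 t - u 0 t > 0" by simp
    define eps where "eps = (y 0 t - u 0 t) / (2 * exp (lam * t))"
    have eps: "eps > 0" unfolding eps_def using c by simp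
    define f where "f k s = u k s - y k s + eps * exp (lam * s)" for k s
    define f' where "f' k s = (if k < p - 1 then u (Suc k) s else (\<Sum>i<p. \<delta> i * u i s) + \<delta> p) - y (Suc k) s + eps * (exp (lam * s) * lam)" for k s
    have "\<forall>i<p. \<forall>s\<in>{0..T}. f i s > 0"
    proof (rule strict_pos)
      fix k s assume k: "k < p" and s: "0 \<le> s" "s \<le> T"
      have "((\<lambda>s. eps * exp (lam * s)) has_real_derivative eps * (exp (lam * s) * lam)) (at s within {0..T})"
        by (auto intro!: derivative_eq_intros)
      then show "(f k has_real_derivative f' k s) (at s within {0..T})"
        unfolding f_def[abs_def] f'_def
        using has_field_derivative_at_within[OF ud[OF k]] yd[OF k s]
        by (intro DERIV_add DERIV_diff) auto
    next
      fix k s assume k: "k < p" and s: "0 \<le> s" "s \<le> T" and nn: "\<forall>j<p. 0 \<le> f j s"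
      have ep: "eps * exp (lam * s) > 0" using eps by simp
      show "f' k s > 0"
      proof (cases "k < p - 1")
        case True
        then have "f (Suc k) s \<ge> 0" using nn by simp
        moreover have "f' k s = f (Suc k) s + eps * exp (lam * s) * (lam - 1)"
          unfolding f'_def f_def using True by (simp add: algebra_simps)
        moreover have "lam - 1 > 0" unfolding lam_def using S0 by simp
        ultimately show ?thesis using ep by (simp add: add_nonneg_pos)
      next
        case False
        then have kp: "Suc k = p" using k by simp
        have "(\<Sum>i<p. \<delta> i * f i s) \<ge> 0" using nn dn by (intro sum_nonneg) auto
        have "(\<Sum>i<p. \<delta> i * f i s) = (\<Sum>i<p. \<delta> i * u i s) - (\<Sum>i<p. \<delta> i * y i s) + eps * exp (lam * s) * S"
          unfolding f_def S_def by (simp add: algebra_simps sum.distrib sum_subtractf sum_distrib_left sum_distrib_right)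
        moreover have "f' k s = (\<Sum>i<p. \<delta> i * u i s) + \<delta> p - y p s + eps * exp (lam * s) * lam"
          unfolding f'_def using False kp by simp
        moreover have "y p s \<le> (\<Sum>i<p. \<delta> i * y i s) + \<delta> p" using bound s by simp
        moreover have "eps * exp (lam * s) * lam > eps * exp (lam * s) * S"
          using ep unfolding lam_def by (intro mult_strict_left_mono) auto
        ultimately show ?thesis using \<open>(\<Sum>i<p. \<delta> i * f i s) \<ge> 0\<close> by linarith
      qed
    next
      fix k assume k: "k < p"
      show "f k 0 > 0" unfolding f_def using init[OF k] eps by simp
    qed
    then have "f 0 t > 0" using p t by auto
    moreover have "eps * exp (lam * t) = (y 0 t - u 0 t) / 2"
      unfolding eps_def by simp
    ultimately show False unfolding f_def using c by (simp add: field_simps)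
  qed
qed


lemma Asum_mid:
  assumes "1 \<le> i" "i \<le> p - 1"
  shows "(\<Sum>l\<in>{1..p+1}. Amat p \<delta> i l * w l) = w (i+1)"
proof -
  have "Amat p \<delta> i l = (if i + 1 = l then 1 else 0)" for l
    using assms unfolding Amat_def by auto
  then have "(\<Sum>l\<in>{1..p+1}. Amat p \<delta> i l * w l) = (\<Sum>l\<in>{1..p+1}. (if i + 1 = l then 1 else 0) * w l)"
    by simp
  also have "\<dots> = w (i+1)" using assms by (intro sdl) auto
  finally show ?thesis .
qed

lemma Asum_p:
  assumes "p \<ge> 1"
  shows "(\<Sum>l\<in>{1..p+1}. Amat p \<delta> p l * w l) = (\<Sum>k<p. \<delta> k * w (Suc k)) + w (p+1)"
proof -
  have s: "{1..p+1} = insert (Suc p) {1..p}" using atLeastAtMostSuc_conv[of 1 p] by simp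
  have "(\<Sum>l\<in>{1..p+1}. Amat p \<delta> p l * w l) = Amat p \<delta> p (Suc p) * w (Suc p) + (\<Sum>l\<in>{1..p}. Amat p \<delta> p l * w l)"
    unfolding s by (subst sum.insert) auto
  also have "(\<Sum>l\<in>{1..p}. Amat p \<delta> p l * w l) = (\<Sum>l\<in>{1..p}. \<delta> (l - 1) * w l)"
    using assms by (intro sum.cong) (auto simp: Amat_def)
  also have "\<dots> = (\<Sum>k<p. \<delta> k * w (Suc k))"
    using sum.atLeast1_atMost_eq[of "\<lambda>l. \<delta> (l - 1) * w l" p] by simp
  also have "Amat p \<delta> p (Suc p) = 1" using assms by (simp add: Amat_def)
  finally show ?thesis by simp
qed

lemma Asum_last: "(\<Sum>l\<in>{1..p+1}. Amat p \<delta> (p+1) l * w l) = 0"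
  by (simp add: Amat_def)

lemma Abound: "\<bar>Amat p \<delta> i j\<bar> \<le> 1 + (\<Sum>k\<le>p. \<bar>\<delta> k\<bar>)"
proof -
  have s0: "(\<Sum>k\<le>p. \<bar>\<delta> k\<bar>) \<ge> 0" by (intro sum_nonneg) auto
  have "\<bar>\<delta> (j - 1)\<bar> \<le> (\<Sum>k\<le>p. \<bar>\<delta> k\<bar>)" if "j \<le> p"
    using that by (intro member_le_sum) auto
  then show ?thesis using s0 unfolding Amat_def by auto
qed

lemma chain_y:
  fixes F :: "'a::euclidean_space \<Rightarrow> 'a" and y :: "real \<Rightarrow> 'a"
  assumes g: "g differentiable (at (y t))"
    and yd: "(y has_vector_derivative F (y t)) (at t within S)"
  shows "((\<lambda>t. g (y t)) has_real_derivative frechet_derivative g (at (y t)) (F (y t))) (at t within S)"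
proof -
  have gd: "(g has_derivative frechet_derivative g (at (y t))) (at (y t))"
    using g frechet_derivative_works by blast
  have "((\<lambda>t. g (y t)) has_derivative (\<lambda>h. frechet_derivative g (at (y t)) (h *\<^sub>R F (y t)))) (at t within S)"
    using has_derivative_compose[OF yd[unfolded has_vector_derivative_def] gd] .
  moreover have "(\<lambda>h. frechet_derivative g (at (y t)) (h *\<^sub>R F (y t))) = (*) (frechet_derivative g (at (y t)) (F (y t)))"
    using linear_cmul[OF has_derivative_linear[OF gd]] by (auto simp: fun_eq_iff)
  ultimately show ?thesis by (simp add: has_field_derivative_def)
qed

theorem proposition4:
  fixes f :: "real^'n \<Rightarrow> real^'m \<Rightarrow> real^'n"
    and \<upsilon> :: "real^'n \<Rightarrow> real^'m"
    and \<phi> :: "(real^'n) \<times> (real^'n) \<Rightarrow> real"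
    and \<xi> :: "real^'n \<Rightarrow> real \<Rightarrow> (real^'n) \<times> (real^'n)"
    and \<alpha> \<theta> d \<epsilon> :: real
    and Z :: "(real^'n) set"
    and \<Xi> :: "((real^'n) \<times> (real^'n)) set"
    and p :: nat
    and \<delta> :: "nat \<Rightarrow> real"
  defines "F \<equiv> Fvf f \<upsilon>"
  assumes F_smooth: "smooth_fun F"
    and F_hom: "\<alpha> \<ge> 1" "\<And>c w. c > 0 \<Longrightarrow> F (c *\<^sub>R w) = (c powr (\<alpha> + 1)) *\<^sub>R F w"
    and phi_smooth: "smooth_fun \<phi>"
    and phi_hom: "\<theta> \<ge> 1" "\<And>c w. c > 0 \<Longrightarrow> \<phi> (c *\<^sub>R w) = (c powr (\<theta> + 1)) * \<phi> w"
    and xi_init: "\<And>x. \<xi> x 0 = (x, 0)"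
    and xi_ode: "\<And>x t. t \<ge> 0 \<Longrightarrow> (\<xi> x has_vector_derivative F (\<xi> x t)) (at t within {0..})"
    and phi_neg: "\<And>x. x \<noteq> 0 \<Longrightarrow> \<phi> (x, 0) < 0"
    and trig_exists: "\<And>x. x \<noteq> 0 \<Longrightarrow> \<exists>tx>0. \<phi> (\<xi> x tx) = 0"
    and Z_compact: "compact Z" and Z_nbhd: "\<exists>r>0. ball 0 r \<subseteq> Z"
    and Xi_compact: "compact \<Xi>" and Xi_nbhd: "\<exists>r>0. ball 0 r \<subseteq> \<Xi>"
    and Xi_inv: "\<And>x t. x \<in> Z \<Longrightarrow> t \<ge> 0 \<Longrightarrow> \<phi> (\<xi> x t) \<le> 0 \<Longrightarrow> \<xi> x t \<in> \<Xi>"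
    and equil: "\<And>\<zeta>. f \<zeta> (\<upsilon> \<zeta>) = 0 \<longleftrightarrow> \<zeta> = 0"
    and d_pos: "d > 0" and Xi_sub: "\<Xi> \<subseteq> ball 0 d"
    and p_ge: "p \<ge> 1" and eps_pos: "\<epsilon> > 0"
    and lie_bound: "\<And>z. z \<in> ball 0 d \<Longrightarrow>
        lie F \<phi> p z \<le> (\<Sum>i<p. \<delta> i * lie F \<phi> i z) + \<delta> p"
    and delta_eps: "\<And>x. x \<in> Z \<Longrightarrow> \<delta> 0 * \<phi> (x, 0) + \<delta> p \<ge> \<epsilon>"
    and delta_nonneg: "\<And>i. i \<le> p \<Longrightarrow> \<delta> i \<ge> 0"
  shows "\<forall>x\<in>Z. \<forall>t\<in>{0..trig_time \<phi> \<xi> x}.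
           eta1 F \<phi> p \<delta> (x, 0) t \<ge> \<phi> (\<xi> x t)"
proof (intro ballI)
  fix x t assume x: "x \<in> Z" and t: "t \<in> {0..trig_time \<phi> \<xi> x}"
  have Fd: "\<And>w. F differentiable (at w)" using smooth_diff[OF F_smooth] .
  have lied: "\<And>k z. lie F \<phi> k differentiable (at z)" using lie_diff[OF F_smooth phi_smooth] .
  have F0: "F 0 = 0" unfolding F_def Fvf_def zero_prod_def using equil[of 0] by simp
  have phi0: "\<phi> 0 = 0"
  proof -
    have "\<phi> 0 = 2 powr (\<theta> + 1) * \<phi> 0" using phi_hom(2)[of 2 0] by simp
    moreover have "2 powr (\<theta> + 1) \<ge> 2 powr 1" using phi_hom(1) by (intro powr_mono) auto
    ultimately show ?thesis by (cases "\<phi> 0 = 0") auto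
  qed
  have yd: "((\<lambda>s. lie F \<phi> k (\<xi> x s)) has_real_derivative lie F \<phi> (Suc k) (\<xi> x s)) (at s within {0..})"
    if "s \<ge> 0" for k s
    using chain_y[where g="lie F \<phi> k" and y="\<xi> x" and F=F and t=s and S="{0..}", OF lied xi_ode[OF that]] by simp
  define K where "K = 1 + (\<Sum>k\<le>p. \<bar>\<delta> k\<bar>)"
  have K0: "K \<ge> 0" unfolding K_def by (simp add: add_nonneg_nonneg sum_nonneg)
  define v where "v = eta0 F \<phi> p \<delta> (x, 0)"
  define w where "w i s = (\<Sum>j\<in>{1..p+1}. mat_exp (p+1) (Amat p \<delta>) s i j * v j)" for i s
  have eta: "eta1 F \<phi> p \<delta> (x, 0) s = w 1 s" for s
    unfolding eta1_def w_def v_def by simp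
  have wd: "(w i has_real_derivative (\<Sum>l\<in>{1..p+1}. Amat p \<delta> i l * w l s)) (at s)"
    if "i \<in> {1..p+1}" for i s
    unfolding w_def using vec_deriv[of "Amat p \<delta>" K, OF _ K0 that] Abound K_def by simp
  have w0: "w i 0 = v i" if "i \<in> {1..p+1}" for i
    unfolding w_def using vec_zero[OF that] by simp
  have wlast: "w (p+1) s = \<delta> p" for s
  proof -
    have "\<forall>s. (w (p+1) has_real_derivative 0) (at s)"
    proof
      fix s
      have "(w (p+1) has_real_derivative (\<Sum>l\<in>{1..p+1}. Amat p \<delta> (p+1) l * w l s)) (at s)"
        by (rule wd) simp
      then show "(w (p+1) has_real_derivative 0) (at s)" unfolding Asum_last .
    qed
    then have "w (p+1) s = w (p+1) 0" by (rule DERIV_isconst_all)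
    also have "\<dots> = v (p+1)" using w0 by simp
    also have "\<dots> = \<delta> p" unfolding v_def eta0_def using p_ge by simp
    finally show ?thesis .
  qed
  have ud: "(w (Suc k) has_real_derivative (if k < p - 1 then w (Suc (Suc k)) s else (\<Sum>i<p. \<delta> i * w (Suc i) s) + \<delta> p)) (at s)"
    if k: "k < p" for k s
  proof (cases "k < p - 1")
    case True
    then show ?thesis using wd[of "Suc k" s] Asum_mid[of "Suc k" p \<delta> "\<lambda>l. w l s"] k by simp
  next
    case False
    then have "Suc k = p" using k by simp
    then show ?thesis using wd[of "Suc k" s] Asum_p[OF p_ge, of \<delta> "\<lambda>l. w l s"] wlast False by simp
  qed
  have init: "w (Suc k) 0 \<ge> lie F \<phi> k (\<xi> x 0)" if k: "k < p" for k
  proof -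
    have "w (Suc k) 0 = v (Suc k)" using w0 k by simp
    moreover have "v (Suc k) \<ge> lie F \<phi> k (x, 0)"
    proof (cases k)
      case 0 then show ?thesis unfolding v_def eta0_def by simp
    next
      case (Suc k')
      then show ?thesis unfolding v_def eta0_def using k by simp
    qed
    ultimately show ?thesis using xi_init by simp
  qed
  show "eta1 F \<phi> p \<delta> (x, 0) t \<ge> \<phi> (\<xi> x t)"
  proof (cases "x = 0")
    case True
    have xi0: "\<xi> 0 s = 0" if "s \<ge> 0" for s
      by (rule zero_sol[OF F0 Fd _ xi_ode that]) (simp add: xi_init zero_prod_def)
    have "{s. s > 0 \<and> \<phi> (\<xi> x s) = 0} = {0<..}" using True xi0 phi0 by auto
    then have "trig_time \<phi> \<xi> x = 0" unfolding trig_time_def by simp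
    then have "t = 0" using t by simp
    then show ?thesis unfolding eta using w0[of 1] xi_init by (simp add: v_def eta0_def)
  next
    case False
    define T where "T = trig_time \<phi> \<xi> x"
    define Zs where "Zs = {s. s > 0 \<and> \<phi> (\<xi> x s) = 0}"
    have Zne: "Zs \<noteq> {}" unfolding Zs_def using trig_exists[OF False] by auto
    have Zbb: "bdd_below Zs" unfolding Zs_def by (rule bdd_belowI[of _ 0]) auto
    have T_def': "T = Inf Zs" unfolding T_def Zs_def trig_time_def by simp
    have T0: "T \<ge> 0" unfolding T_def' using Zne by (intro cInf_greatest) (auto simp: Zs_def)
    have yd0: "((\<lambda>s. \<phi> (\<xi> x s)) has_real_derivative lie F \<phi> 1 (\<xi> x s)) (at s within {0..})"
      if "s \<ge> 0" for s
      using yd[OF that, of 0] by simp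
    have phicont: "continuous_on {0..s} (\<lambda>s. \<phi> (\<xi> x s))" if "s \<ge> 0" for s
    proof (rule DERIV_continuous_on[of _ _ "\<lambda>s. lie F \<phi> 1 (\<xi> x s)"])
      fix r assume "r \<in> {0..s}"
      then show "((\<lambda>s. \<phi> (\<xi> x s)) has_real_derivative lie F \<phi> 1 (\<xi> x r)) (at r within {0..s})"
        by (intro has_field_derivative_subset[OF yd0]) auto
    qed
    have nonpos: "\<phi> (\<xi> x s) \<le> 0" if s: "0 \<le> s" "s \<le> T" for s
    proof (rule ccontr)
      assume "\<not> \<phi> (\<xi> x s) \<le> 0"
      then have pos: "\<phi> (\<xi> x s) > 0" by simp
      have neg0: "\<phi> (\<xi> x 0) < 0" using xi_init phi_neg[OF False] by simp
      obtain r where r: "0 \<le> r" "r \<le> s" "\<phi> (\<xi> x r) = 0"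
        using IVT'[of "\<lambda>s. \<phi> (\<xi> x s)" 0 0 s] neg0 pos s phicont[OF s(1)] by auto
      have "r \<noteq> 0" using r neg0 by auto
      then have "r \<in> Zs" unfolding Zs_def using r by simp
      then have "T \<le> r" unfolding T_def' using Zbb by (rule cInf_lower)
      then have "r = s" using r s by simp
      then show False using r pos by simp
    qed
    have inball: "\<xi> x s \<in> ball 0 d" if "0 \<le> s" "s \<le> T" for s
      using Xi_inv[OF x that(1) nonpos[OF that]] Xi_sub by auto
    have "\<forall>s\<in>{0..T}. w (Suc 0) s \<ge> lie F \<phi> 0 (\<xi> x s)"
    proof (rule compare[OF p_ge delta_nonneg, where u = "\<lambda>k. w (Suc k)" and y = "\<lambda>k s. lie F \<phi> k (\<xi> x s)"])
      show "\<And>k s. k < p \<Longrightarrow> (w (Suc k) has_real_derivative (if k < p - 1 then w (Suc (Suc k)) s else (\<Sum>i<p. \<delta> i * w (Suc i) s) + \<delta> p)) (at s)"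
        using ud by blast
      show "((\<lambda>s. lie F \<phi> k (\<xi> x s)) has_real_derivative lie F \<phi> (Suc k) (\<xi> x s)) (at s within {0..T})"
        if "k < p" "0 \<le> s" "s \<le> T" for k s
        by (rule has_field_derivative_subset[OF yd[OF that(2)]]) auto
      show "\<And>s. 0 \<le> s \<Longrightarrow> s \<le> T \<Longrightarrow> lie F \<phi> p (\<xi> x s) \<le> (\<Sum>i<p. \<delta> i * lie F \<phi> i (\<xi> x s)) + \<delta> p"
        using lie_bound inball by simp
      show "\<And>k. k < p \<Longrightarrow> w (Suc k) 0 \<ge> lie F \<phi> k (\<xi> x 0)"
        using init by blast
    qed auto
    then show ?thesis unfolding eta using t unfolding T_def by simp
  qed
qed

end
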